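(* Let $x_0\in\mathbb{R}$ and suppose $\displaystyle \lim_{n\to\infty}\frac{p_n(x_0)^2}{K_n(x_0,x_0)}=0$. Then $\limsup_{n\to\infty}K_n(x_0,x_0)^{1/n}\le1$, and in particular $\limsup_{n\to\infty}\big(p_n(x_0)^2+p_{n+1}(x_0)^2\big)^{1/n}\le1$.
   Context: Let $\rho$ be a probability measure on $\mathbb{R}$ with compact but infinite support, $p_n$ ($n\ge0$) its orthonormal polynomials (real coefficients, positive leading coefficient, $p_0=1$), and $K_n(x,y)=\sum_{j=0}^n p_j(x)p_j(y)$. *)

theory Defs
  imports "HOL-Analysis.Analysis" "HOL-Probability.Probability" "HOL-Computational_Algebra.Polynomial"
begin

definition measure_support :: "real measure \<Rightarrow> real set" where
  "measure_support \<mu> = {x. \<forall>U. open U \<longrightarrow> x \<in> U \<longrightarrow> emeasure \<mu> U > 0}"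

definition orthonormal_polys :: "real measure \<Rightarrow> (nat \<Rightarrow> real poly) \<Rightarrow> bool" where
  "orthonormal_polys \<mu> p \<longleftrightarrow>
     (\<forall>n. degree (p n) = n \<and> lead_coeff (p n) > 0) \<and>
     (\<forall>i j. (\<integral>x. poly (p i) x * poly (p j) x \<partial>\<mu>) = (if i = j then 1 else 0))"

definition CD_kernel :: "(nat \<Rightarrow> real poly) \<Rightarrow> nat \<Rightarrow> real \<Rightarrow> real \<Rightarrow> real" where
  "CD_kernel p n x y = (\<Sum>j\<le>n. poly (p j) x * poly (p j) y)"

end

theory Submission
  imports Defs
begin

lemma growth_bound:
  fixes a :: "nat \<Rightarrow> real"
  assumes pos: "\<And>n. a n > 0" and lim: "(\<lambda>n. a n / a (Suc n)) \<longlonglongrightarrow> 1"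
    and q: "q > 1"
  shows "\<exists>C N. C > 0 \<and> (\<forall>n\<ge>N. a n \<le> C * q ^ n)"
proof -
  have "1 / q < 1" using q by simp
  hence "eventually (\<lambda>n. a n / a (Suc n) > 1 / q) sequentially"
    using lim order_tendstoD(1) by blast
  then obtain N where N: "\<And>n. n \<ge> N \<Longrightarrow> a n / a (Suc n) > 1 / q"
    by (auto simp: eventually_sequentially)
  have step: "a (Suc n) \<le> q * a n" if "n \<ge> N" for n
  proof -
    have "a n / a (Suc n) > 1 / q" using N that by blast
    hence "a n * q > a (Suc n)" using pos[of n] pos[of "Suc n"] q
      by (simp add: field_simps)
    thus ?thesis by (simp add: mult.commute)
  qed
  have ind: "a (N + k) \<le> a N * q ^ k" for k
  proof (induction k)
    case 0 then show ?case by simp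
  next
    case (Suc k)
    have "a (N + Suc k) \<le> q * a (N + k)" using step[of "N+k"] by simp
    also have "\<dots> \<le> q * (a N * q ^ k)" using Suc q by simp
    finally show ?case by (simp add: algebra_simps)
  qed
  show ?thesis
  proof (intro exI conjI allI impI)
    show "a N / q ^ N > 0" using pos q by simp
    fix n assume "n \<ge> N"
    then obtain k where k: "n = N + k" using le_Suc_ex by blast
    have "a n \<le> a N * q ^ k" using ind k by simp
    also have "\<dots> = a N / q ^ N * q ^ n" using q by (simp add: k power_add)
    finally show "a n \<le> a N / q ^ N * q ^ n" .
  qed
qed

lemma limsup_root_le1:
  fixes b :: "nat \<Rightarrow> real"
  assumes nn: "\<And>n. b n \<ge> 0"
    and bd: "\<And>q. q > 1 \<Longrightarrow> \<exists>C N. C > 0 \<and> (\<forall>n\<ge>N. b n \<le> C * q ^ n)"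
  shows "limsup (\<lambda>n. ereal (b n powr (1 / real n))) \<le> 1"
  unfolding Limsup_le_iff
proof (intro allI impI)
  fix y :: ereal assume y: "y > 1"
  show "\<forall>\<^sub>F n in sequentially. y > ereal (b n powr (1 / real n))"
  proof (cases y)
    case PInf then show ?thesis by simp
  next
    case MInf then show ?thesis using y by simp
  next
    case (real r)
    with y have r: "r > 1" by simp
    define q where "q = (1 + r) / 2"
    have q1: "q > 1" and qr: "q < r" using r by (auto simp: q_def)
    obtain C N where C: "C > 0" and CN: "\<And>n. n \<ge> N \<Longrightarrow> b n \<le> C * q ^ n"
      using bd[OF q1] by blast
    have "(\<lambda>n. C powr (1 / real n)) \<longlonglongrightarrow> C powr 0"
      by (intro tendsto_powr tendsto_const lim_1_over_n) (use C in auto)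
    hence "(\<lambda>n. C powr (1 / real n)) \<longlonglongrightarrow> 1" using C by simp
    moreover have "r / q > 1" using qr q1 by simp
    ultimately have ev: "eventually (\<lambda>n. C powr (1 / real n) < r / q) sequentially"
      using order_tendstoD(2) by blast
    have "eventually (\<lambda>n. n \<ge> max N 1) sequentially" by (rule eventually_ge_at_top)
    with ev show ?thesis
    proof eventually_elim
      case (elim n)
      hence nN: "n \<ge> N" and n1: "n \<ge> 1" by auto
      have "b n powr (1 / real n) \<le> (C * q ^ n) powr (1 / real n)"
        by (rule powr_mono2) (use nn CN[OF nN] in auto)
      also have "\<dots> = C powr (1 / real n) * (q ^ n) powr (1 / real n)"
        using C q1 by (simp add: powr_mult)
      also have "(q ^ n) powr (1 / real n) = q"
        using q1 n1 by (simp add: powr_realpow[symmetric] powr_powr)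
      also have "C powr (1 / real n) * q < r / q * q"
        using elim q1 by (intro mult_strict_right_mono) auto
      also have "r / q * q = r" using q1 by simp
      finally show ?case using real by simp
    qed
  qed
qed

theorem proposition3p1:
  fixes \<mu> :: "real measure" and p :: "nat \<Rightarrow> real poly" and x0 :: real
  assumes "prob_space \<mu>"
    and "sets \<mu> = sets borel"
    and "compact (measure_support \<mu>)"
    and "infinite (measure_support \<mu>)"
    and "orthonormal_polys \<mu> p"
    and "(\<lambda>n. (poly (p n) x0)\<^sup>2 / CD_kernel p n x0 x0) \<longlonglongrightarrow> 0"
  shows "limsup (\<lambda>n. ereal (CD_kernel p n x0 x0 powr (1 / real n))) \<le> 1
         \<and> limsup (\<lambda>n. ereal (((poly (p n) x0)\<^sup>2 + (poly (p (Suc n)) x0)\<^sup>2) powr (1 / real n))) \<le> 1"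
proof -
  define K where "K n = CD_kernel p n x0 x0" for n
  have d0: "degree (p 0) = 0" and l0: "lead_coeff (p 0) > 0"
    using assms(5) unfolding orthonormal_polys_def by blast+
  have p0: "poly (p 0) x0 = coeff (p 0) 0"
    using degree_0_id[OF d0] by (metis poly_pCons mult_zero_right add.right_neutral poly_0)
  have c0: "(poly (p 0) x0)\<^sup>2 > 0" using p0 l0 d0 by simp
  have Ksuc: "K (Suc n) = K n + (poly (p (Suc n)) x0)\<^sup>2" for n
    by (simp add: K_def CD_kernel_def power2_eq_square)
  have Kge: "K n \<ge> (poly (p 0) x0)\<^sup>2" for n
  proof (induction n)
    case 0 then show ?case by (simp add: K_def CD_kernel_def power2_eq_square)
  next
    case (Suc n) then show ?case using Ksuc[of n] by (smt (verit) zero_le_power2)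
  qed
  have Kpos: "K n > 0" for n using Kge[of n] c0 by linarith
  have "(\<lambda>n. (poly (p (Suc n)) x0)\<^sup>2 / K (Suc n)) \<longlonglongrightarrow> 0"
    using assms(6) LIMSEQ_Suc unfolding K_def by blast
  hence "(\<lambda>n. 1 - (poly (p (Suc n)) x0)\<^sup>2 / K (Suc n)) \<longlonglongrightarrow> 1 - 0"
    by (intro tendsto_diff tendsto_const)
  moreover have "1 - (poly (p (Suc n)) x0)\<^sup>2 / K (Suc n) = K n / K (Suc n)" for n
    using Kpos[of "Suc n"] Ksuc[of n] by (simp add: field_simps)
  ultimately have lim: "(\<lambda>n. K n / K (Suc n)) \<longlonglongrightarrow> 1" by simp
  have gb: "\<exists>C N. C > 0 \<and> (\<forall>n\<ge>N. K n \<le> C * q ^ n)" if "q > 1" for q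
    by (rule growth_bound[OF Kpos lim that])
  have part1: "limsup (\<lambda>n. ereal (K n powr (1 / real n))) \<le> 1"
    by (rule limsup_root_le1) (use Kpos gb in \<open>auto simp: less_imp_le\<close>)
  have part2: "limsup (\<lambda>n. ereal (((poly (p n) x0)\<^sup>2 + (poly (p (Suc n)) x0)\<^sup>2) powr (1 / real n))) \<le> 1"
  proof (rule limsup_root_le1)
    fix q :: real assume q: "q > 1"
    obtain C N where C: "C > 0" and CN: "\<And>n. n \<ge> N \<Longrightarrow> K n \<le> C * q ^ n"
      using gb[OF q] by blast
    have le: "(poly (p n) x0)\<^sup>2 + (poly (p (Suc n)) x0)\<^sup>2 \<le> K (Suc n)" for n
    proof (cases n)
      case 0 then show ?thesis using Ksuc[of 0] by (simp add: K_def CD_kernel_def power2_eq_square)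
    next
      case (Suc m) then show ?thesis using Ksuc[of n] Ksuc[of m] Kge[of m] c0 by (smt (verit) zero_le_power2)
    qed
    show "\<exists>C N. C > 0 \<and> (\<forall>n\<ge>N. (poly (p n) x0)\<^sup>2 + (poly (p (Suc n)) x0)\<^sup>2 \<le> C * q ^ n)"
    proof (intro exI conjI allI impI)
      show "C * q > 0" using C q by simp
      fix n assume "n \<ge> N"
      hence "K (Suc n) \<le> C * q ^ Suc n" using CN[of "Suc n"] by linarith
      thus "(poly (p n) x0)\<^sup>2 + (poly (p (Suc n)) x0)\<^sup>2 \<le> C * q * q ^ n"
        using le[of n] by (simp add: algebra_simps)
    qed
  qed simp
  show ?thesis using part1 part2 unfolding K_def by simp
qed

end
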